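(* If $L\subseteq\Sigma^*$ is a Boolean combination of bounded languages, then $L\in\mathcal{L}(\mathsf{FC})$ if and only if $L\in\mathcal{L}(\mathsf{FC}[\mathsf{REG}])$.
   Context: $\Sigma$ is a fixed finite alphabet. For $w \in \Sigma^*$, $\mathsf{Facs}(w)$ is the set of all factors of $w$. The structure $\mathfrak{A}_w$ representing $w$ has universe $\mathsf{Facs}(w)\cup\{\perp\}$, a ternary relation $R_\circ=\{(x,y,z)\in\mathsf{Facs}(w)^3 : x=y\cdot z\}$, for each letter a constant interpreted as that letter if it occurs in $w$ and as $\perp$ otherwise, and a constant $\varepsilon$ interpreted as the empty word. $\mathsf{FC}$ is first-order logic over such structures, with atomic formulas $(x \mathbin{\dot=} y\cdot z)$ (meaning $R_\circ(x,y,z)$) where $x,y,z$ are variables, letters of $\Sigma$, or $\varepsilon$, closed under $\land,\lor,\neg,\exists,\forall$; quantified variables range over $\mathsf{Facs}(w)$. $\mathsf{FC}[\mathsf{REG}]$ extends $\mathsf{FC}$ with atomic regular constraints $(x \mathbin{\dot\in}\gamma)$, $\gamma$ a regular expression, which hold under an assignment $\sigma$ in $\mathfrak{A}_w$ iff $\sigma(x)$ is a factor of $w$ and $\sigma(x)\in\mathcal{L}(\gamma)$. For a sentence $\varphi$, $\mathcal{L}(\varphi)=\{w\in\Sigma^*:\mathfrak{A}_w\models\varphi\}$; $\mathcal{L}(\mathsf{FC})$ and $\mathcal{L}(\mathsf{FC}[\mathsf{REG}])$ are the classes of languages defined by sentences of the respective logics. A language $L\subseteq\Sigma^*$ is bounded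 if $L\subseteq w_1^*w_2^*\cdots w_n^*$ for some $n\in\mathbb{N}$ and $w_1,\dots,w_n\in\Sigma^*$. *)

theory Defs
  imports Main
begin

definition facs :: "'a list \<Rightarrow> 'a list set" where
  "facs w = {v. \<exists>x y. w = x @ v @ y}"

definition conc :: "'a list set \<Rightarrow> 'a list set \<Rightarrow> 'a list set" where
  "conc A B = {x @ y | x y. x \<in> A \<and> y \<in> B}"

fun lpow :: "'a list set \<Rightarrow> nat \<Rightarrow> 'a list set" where
  "lpow A 0 = {[]}"
| "lpow A (Suc n) = conc A (lpow A n)"

definition lstar :: "'a list set \<Rightarrow> 'a list set" where
  "lstar A = (\<Union>n. lpow A n)"

datatype 'a rexp = RZero | REps | RAtom 'a | RPlus "'a rexp" "'a rexp"
  | RTimes "'a rexp" "'a rexp" | RStar "'a rexp"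

fun rlang :: "'a rexp \<Rightarrow> 'a list set" where
  "rlang RZero = {}"
| "rlang REps = {[]}"
| "rlang (RAtom a) = {[a]}"
| "rlang (RPlus r s) = rlang r \<union> rlang s"
| "rlang (RTimes r s) = conc (rlang r) (rlang s)"
| "rlang (RStar r) = lstar (rlang r)"

datatype 'a fcterm = Var nat | Let 'a | Eps

datatype 'a fcform =
    Cat "'a fcterm" "'a fcterm" "'a fcterm"   (* x = y . z *)
  | Reg nat "'a rexp"
  | Neg "'a fcform"
  | Conj "'a fcform" "'a fcform"
  | Disj "'a fcform" "'a fcform"
  | Ex nat "'a fcform"
  | All nat "'a fcform"

text \<open>Elements of the structure A_w: Some v for a factor v, None for bottom.\<close>
fun tval :: "'a list \<Rightarrow> (nat \<Rightarrow> 'a list option) \<Rightarrow> 'a fcterm \<Rightarrow> 'a list option" where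
  "tval w \<sigma> (Var x) = \<sigma> x"
| "tval w \<sigma> (Let a) = (if a \<in> set w then Some [a] else None)"
| "tval w \<sigma> Eps = Some []"

fun sat :: "'a list \<Rightarrow> (nat \<Rightarrow> 'a list option) \<Rightarrow> 'a fcform \<Rightarrow> bool" where
  "sat w \<sigma> (Cat x y z) =
     (\<exists>u v t. tval w \<sigma> x = Some u \<and> tval w \<sigma> y = Some v \<and> tval w \<sigma> z = Some t
        \<and> u \<in> facs w \<and> v \<in> facs w \<and> t \<in> facs w \<and> u = v @ t)"
| "sat w \<sigma> (Reg x r) = (\<exists>u. \<sigma> x = Some u \<and> u \<in> facs w \<and> u \<in> rlang r)"
| "sat w \<sigma> (Neg \<phi>) = (\<not> sat w \<sigma> \<phi>)"
| "sat w \<sigma> (Conj \<phi> \<psi>) = (sat w \<sigma> \<phi> \<and> sat w \<sigma> \<psi>)"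
| "sat w \<sigma> (Disj \<phi> \<psi>) = (sat w \<sigma> \<phi> \<or> sat w \<sigma> \<psi>)"
| "sat w \<sigma> (Ex x \<phi>) = (\<exists>u\<in>facs w. sat w (\<sigma>(x := Some u)) \<phi>)"
| "sat w \<sigma> (All x \<phi>) = (\<forall>u\<in>facs w. sat w (\<sigma>(x := Some u)) \<phi>)"

fun tvars :: "'a fcterm \<Rightarrow> nat set" where
  "tvars (Var x) = {x}"
| "tvars (Let a) = {}"
| "tvars Eps = {}"

fun fv :: "'a fcform \<Rightarrow> nat set" where
  "fv (Cat x y z) = tvars x \<union> tvars y \<union> tvars z"
| "fv (Reg x r) = {x}"
| "fv (Neg \<phi>) = fv \<phi>"
| "fv (Conj \<phi> \<psi>) = fv \<phi> \<union> fv \<psi>"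
| "fv (Disj \<phi> \<psi>) = fv \<phi> \<union> fv \<psi>"
| "fv (Ex x \<phi>) = fv \<phi> - {x}"
| "fv (All x \<phi>) = fv \<phi> - {x}"

fun pure_fc :: "'a fcform \<Rightarrow> bool" where
  "pure_fc (Cat x y z) = True"
| "pure_fc (Reg x r) = False"
| "pure_fc (Neg \<phi>) = pure_fc \<phi>"
| "pure_fc (Conj \<phi> \<psi>) = (pure_fc \<phi> \<and> pure_fc \<psi>)"
| "pure_fc (Disj \<phi> \<psi>) = (pure_fc \<phi> \<and> pure_fc \<psi>)"
| "pure_fc (Ex x \<phi>) = pure_fc \<phi>"
| "pure_fc (All x \<phi>) = pure_fc \<phi>"

text \<open>Language of a sentence (the assignment is irrelevant for sentences; we fix bottom).\<close>
definition flang :: "'a fcform \<Rightarrow> 'a list set" where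
  "flang \<phi> = {w. sat w (\<lambda>_. None) \<phi>}"

definition FC_definable :: "('a::finite) list set \<Rightarrow> bool" where
  "FC_definable L \<longleftrightarrow> (\<exists>\<phi>. fv \<phi> = {} \<and> pure_fc \<phi> \<and> L = flang \<phi>)"

definition FCREG_definable :: "('a::finite) list set \<Rightarrow> bool" where
  "FCREG_definable L \<longleftrightarrow> (\<exists>\<phi>. fv \<phi> = {} \<and> L = flang \<phi>)"

definition wstar :: "'a list \<Rightarrow> 'a list set" where
  "wstar u = {concat (replicate k u) | k. True}"

definition bounded_lang :: "'a list set \<Rightarrow> bool" where
  "bounded_lang L \<longleftrightarrow> (\<exists>ws. L \<subseteq> foldr (\<lambda>u A. conc (wstar u) A) ws {[]})"

inductive bool_comb_bounded :: "'a list set \<Rightarrow> bool" where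
  base: "bounded_lang L \<Longrightarrow> bool_comb_bounded L"
| compl: "bool_comb_bounded L \<Longrightarrow> bool_comb_bounded (- L)"
| union: "bool_comb_bounded A \<Longrightarrow> bool_comb_bounded B \<Longrightarrow> bool_comb_bounded (A \<union> B)"
| inter: "bool_comb_bounded A \<Longrightarrow> bool_comb_bounded B \<Longrightarrow> bool_comb_bounded (A \<inter> B)"

end

theory Submission
  imports Defs
begin


abbreviation pw :: "'a list \<Rightarrow> nat \<Rightarrow> 'a list" where "pw u k \<equiv> concat (replicate k u)"

lemma facs_refl: "w \<in> facs w"
  unfolding facs_def by (rule CollectI, rule exI[of _ "[]"], rule exI[of _ "[]"]) simp

lemma facs_Nil: "[] \<in> facs w"
  unfolding facs_def by (rule CollectI, rule exI[of _ "[]"], rule exI[of _ "w"]) simp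

lemma facs_trans: "u \<in> facs v \<Longrightarrow> v \<in> facs w \<Longrightarrow> u \<in> facs w"
proof -
  assume "u \<in> facs v" "v \<in> facs w"
  then obtain a b c d where "v = a @ u @ b" "w = c @ v @ d" unfolding facs_def by blast
  then have "w = (c @ a) @ u @ (b @ d)" by simp
  then show ?thesis unfolding facs_def by blast
qed

lemma facs_app: "p @ y \<in> facs w \<Longrightarrow> p \<in> facs w \<and> y \<in> facs w"
proof -
  assume "p @ y \<in> facs w"
  then obtain c d where "w = c @ (p @ y) @ d" unfolding facs_def by blast
  then have "w = c @ p @ (y @ d)" "w = (c @ p) @ y @ d" by simp_all
  then show ?thesis unfolding facs_def by blast
qed

lemma facs_letter: "a \<in> set w \<Longrightarrow> [a] \<in> facs w"
proof -
  assume "a \<in> set w"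
  then obtain c d where "w = c @ a # d" by (meson split_list)
  then have "w = c @ [a] @ d" by simp
  then show ?thesis unfolding facs_def by blast
qed

lemma facs_letter2: "[a] \<in> facs w \<Longrightarrow> a \<in> set w"
  unfolding facs_def by auto

lemma tval_cong: "(\<forall>x\<in>tvars t. \<sigma> x = \<sigma>' x) \<Longrightarrow> tval w \<sigma> t = tval w \<sigma>' t"
  by (cases t) auto

lemma sat_cong: "(\<forall>x\<in>fv \<phi>. \<sigma> x = \<sigma>' x) \<Longrightarrow> sat w \<sigma> \<phi> = sat w \<sigma>' \<phi>"
proof (induction \<phi> arbitrary: \<sigma> \<sigma>')
  case (Cat x y z)
  then have "tval w \<sigma> x = tval w \<sigma>' x" "tval w \<sigma> y = tval w \<sigma>' y" "tval w \<sigma> z = tval w \<sigma>' z"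
    by (auto intro: tval_cong)
  then show ?case by simp
next
  case (Ex x \<phi>)
  have "\<And>u. sat w (\<sigma>(x:=Some u)) \<phi> = sat w (\<sigma>'(x:=Some u)) \<phi>"
    by (rule Ex.IH) (use Ex.prems in auto)
  then show ?case by simp
next
  case (All x \<phi>)
  have "\<And>u. sat w (\<sigma>(x:=Some u)) \<phi> = sat w (\<sigma>'(x:=Some u)) \<phi>"
    by (rule All.IH) (use All.prems in auto)
  then show ?case by simp
next
  case (Reg x r) then show ?case by simp
next
  case (Neg \<phi>)
  have "sat w \<sigma> \<phi> = sat w \<sigma>' \<phi>" by (rule Neg.IH) (use Neg.prems in auto)
  then show ?case by simp
next
  case (Conj \<phi> \<psi>)
  have "sat w \<sigma> \<phi> = sat w \<sigma>' \<phi>" by (rule Conj.IH(1)) (use Conj.prems in auto)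
  moreover have "sat w \<sigma> \<psi> = sat w \<sigma>' \<psi>" by (rule Conj.IH(2)) (use Conj.prems in auto)
  ultimately show ?case by simp
next
  case (Disj \<phi> \<psi>)
  have "sat w \<sigma> \<phi> = sat w \<sigma>' \<phi>" by (rule Disj.IH(1)) (use Disj.prems in auto)
  moreover have "sat w \<sigma> \<psi> = sat w \<sigma>' \<psi>" by (rule Disj.IH(2)) (use Disj.prems in auto)
  ultimately show ?case by simp
qed

definition defs :: "'a list set \<Rightarrow> ('a list \<Rightarrow> bool) \<Rightarrow> bool" where
  "defs D P \<longleftrightarrow> (\<forall>x. \<exists>\<psi>. pure_fc \<psi> \<and> fv \<psi> \<subseteq> {x} \<and>
     (\<forall>w \<sigma> u. \<sigma> x = Some u \<longrightarrow> u \<in> facs w \<longrightarrow> u \<in> D \<longrightarrow> (sat w \<sigma> \<psi> \<longleftrightarrow> P u)))"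


lemma defsE:
  assumes "defs D P"
  obtains \<psi> where "pure_fc \<psi>" "fv \<psi> \<subseteq> {x}"
    "\<And>w \<sigma> u. \<sigma> x = Some u \<Longrightarrow> u \<in> facs w \<Longrightarrow> u \<in> D \<Longrightarrow> sat w \<sigma> \<psi> = P u"
proof -
  from assms[unfolded defs_def, THEN spec, of x] obtain \<psi> where
    h: "pure_fc \<psi> \<and> fv \<psi> \<subseteq> {x} \<and> (\<forall>w \<sigma> u. \<sigma> x = Some u \<longrightarrow> u \<in> facs w \<longrightarrow> u \<in> D \<longrightarrow> sat w \<sigma> \<psi> = P u)" ..
  show thesis
  proof (rule that)
    show "pure_fc \<psi>" using h by (rule conjunct1)
    show "fv \<psi> \<subseteq> {x}" using h[THEN conjunct2] by (rule conjunct1)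
    fix w \<sigma> u assume "\<sigma> x = Some u" "u \<in> facs w" "u \<in> D"
    then show "sat w \<sigma> \<psi> = P u" using h[THEN conjunct2, THEN conjunct2] by simp
  qed
qed

definition TT :: "'a fcform" where "TT = Cat Eps Eps Eps"

lemma TT: "sat w \<sigma> TT" "fv TT = {}" "pure_fc TT"
  unfolding TT_def by (auto simp: facs_Nil)

lemma defs_const: "defs D (\<lambda>u. b)"
  unfolding defs_def
proof
  fix x
  show "\<exists>\<psi>. pure_fc \<psi> \<and> fv \<psi> \<subseteq> {x} \<and> (\<forall>w \<sigma> u. \<sigma> x = Some u \<longrightarrow> u \<in> facs w \<longrightarrow> u \<in> D \<longrightarrow> sat w \<sigma> \<psi> = b)"
    by (rule exI[of _ "if b then TT else Neg TT"]) (simp add: TT)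
qed

lemma defs_neg: "defs D P \<Longrightarrow> defs D (\<lambda>u. \<not> P u)"
  unfolding defs_def
proof (intro allI)
  fix x
  assume a: "\<forall>x. \<exists>\<psi>. pure_fc \<psi> \<and> fv \<psi> \<subseteq> {x} \<and> (\<forall>w \<sigma> u. \<sigma> x = Some u \<longrightarrow> u \<in> facs w \<longrightarrow> u \<in> D \<longrightarrow> sat w \<sigma> \<psi> = P u)"
  obtain p where p: "pure_fc p \<and> fv p \<subseteq> {x} \<and> (\<forall>w \<sigma> u. \<sigma> x = Some u \<longrightarrow> u \<in> facs w \<longrightarrow> u \<in> D \<longrightarrow> sat w \<sigma> p = P u)"
    using a by blast
  show "\<exists>\<psi>. pure_fc \<psi> \<and> fv \<psi> \<subseteq> {x} \<and> (\<forall>w \<sigma> u. \<sigma> x = Some u \<longrightarrow> u \<in> facs w \<longrightarrow> u \<in> D \<longrightarrow> sat w \<sigma> \<psi> = (\<not> P u))"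
  proof (rule exI[of _ "Neg p"], intro conjI allI impI)
    show "pure_fc (Neg p)" "fv (Neg p) \<subseteq> {x}" using p by auto
    fix w \<sigma> u assume h: "\<sigma> x = Some u" "u \<in> facs w" "u \<in> D"
    have "sat w \<sigma> p = P u" using p h by blast
    then show "sat w \<sigma> (Neg p) = (\<not> P u)" by simp
  qed
qed

lemma defs_disj: "defs D P \<Longrightarrow> defs D Q \<Longrightarrow> defs D (\<lambda>u. P u \<or> Q u)"
  unfolding defs_def
proof (intro allI)
  fix x
  assume a: "\<forall>x. \<exists>\<psi>. pure_fc \<psi> \<and> fv \<psi> \<subseteq> {x} \<and> (\<forall>w \<sigma> u. \<sigma> x = Some u \<longrightarrow> u \<in> facs w \<longrightarrow> u \<in> D \<longrightarrow> sat w \<sigma> \<psi> = P u)"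
    and b: "\<forall>x. \<exists>\<psi>. pure_fc \<psi> \<and> fv \<psi> \<subseteq> {x} \<and> (\<forall>w \<sigma> u. \<sigma> x = Some u \<longrightarrow> u \<in> facs w \<longrightarrow> u \<in> D \<longrightarrow> sat w \<sigma> \<psi> = Q u)"
  obtain p where p: "pure_fc p \<and> fv p \<subseteq> {x} \<and> (\<forall>w \<sigma> u. \<sigma> x = Some u \<longrightarrow> u \<in> facs w \<longrightarrow> u \<in> D \<longrightarrow> sat w \<sigma> p = P u)"
    using a by blast
  obtain q where q: "pure_fc q \<and> fv q \<subseteq> {x} \<and> (\<forall>w \<sigma> u. \<sigma> x = Some u \<longrightarrow> u \<in> facs w \<longrightarrow> u \<in> D \<longrightarrow> sat w \<sigma> q = Q u)"
    using b by blast
  show "\<exists>\<psi>. pure_fc \<psi> \<and> fv \<psi> \<subseteq> {x} \<and> (\<forall>w \<sigma> u. \<sigma> x = Some u \<longrightarrow> u \<in> facs w \<longrightarrow> u \<in> D \<longrightarrow> sat w \<sigma> \<psi> = (P u \<or> Q u))"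
  proof (rule exI[of _ "Disj p q"], intro conjI allI impI)
    show "pure_fc (Disj p q)" "fv (Disj p q) \<subseteq> {x}" using p q by auto
    fix w \<sigma> u assume h: "\<sigma> x = Some u" "u \<in> facs w" "u \<in> D"
    have "sat w \<sigma> p = P u" "sat w \<sigma> q = Q u" using p q h by blast+
    then show "sat w \<sigma> (Disj p q) = (P u \<or> Q u)" by simp
  qed
qed

lemma defs_conj: "defs D P \<Longrightarrow> defs (D \<inter> Collect P) Q \<Longrightarrow> defs D (\<lambda>u. P u \<and> Q u)"
  unfolding defs_def
proof (intro allI)
  fix x
  assume a: "\<forall>x. \<exists>\<psi>. pure_fc \<psi> \<and> fv \<psi> \<subseteq> {x} \<and> (\<forall>w \<sigma> u. \<sigma> x = Some u \<longrightarrow> u \<in> facs w \<longrightarrow> u \<in> D \<longrightarrow> sat w \<sigma> \<psi> = P u)"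
    and b: "\<forall>x. \<exists>\<psi>. pure_fc \<psi> \<and> fv \<psi> \<subseteq> {x} \<and> (\<forall>w \<sigma> u. \<sigma> x = Some u \<longrightarrow> u \<in> facs w \<longrightarrow> u \<in> D \<inter> Collect P \<longrightarrow> sat w \<sigma> \<psi> = Q u)"
  obtain p where p: "pure_fc p \<and> fv p \<subseteq> {x} \<and> (\<forall>w \<sigma> u. \<sigma> x = Some u \<longrightarrow> u \<in> facs w \<longrightarrow> u \<in> D \<longrightarrow> sat w \<sigma> p = P u)"
    using a by blast
  obtain q where q: "pure_fc q \<and> fv q \<subseteq> {x} \<and> (\<forall>w \<sigma> u. \<sigma> x = Some u \<longrightarrow> u \<in> facs w \<longrightarrow> u \<in> D \<inter> Collect P \<longrightarrow> sat w \<sigma> q = Q u)"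
    using b by blast
  show "\<exists>\<psi>. pure_fc \<psi> \<and> fv \<psi> \<subseteq> {x} \<and> (\<forall>w \<sigma> u. \<sigma> x = Some u \<longrightarrow> u \<in> facs w \<longrightarrow> u \<in> D \<longrightarrow> sat w \<sigma> \<psi> = (P u \<and> Q u))"
  proof (rule exI[of _ "Conj p q"], intro conjI allI impI)
    show "pure_fc (Conj p q)" "fv (Conj p q) \<subseteq> {x}" using p q by auto
    fix w \<sigma> u assume h: "\<sigma> x = Some u" "u \<in> facs w" "u \<in> D"
    have e1: "sat w \<sigma> p = P u" using p h by blast
    show "sat w \<sigma> (Conj p q) = (P u \<and> Q u)"
    proof (cases "P u")
      case True
      then have "sat w \<sigma> q = Q u" using q h by blast
      then show ?thesis using e1 by simp
    next
      case False
      then show ?thesis using e1 by simp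
    qed
  qed
qed

lemma defs_mono: assumes "D' \<subseteq> D" "defs D P" shows "defs D' P"
  unfolding defs_def
proof (intro allI)
  fix x
  obtain p where p: "pure_fc p \<and> fv p \<subseteq> {x} \<and> (\<forall>w \<sigma> u. \<sigma> x = Some u \<longrightarrow> u \<in> facs w \<longrightarrow> u \<in> D \<longrightarrow> sat w \<sigma> p = P u)"
    using assms(2) unfolding defs_def by blast
  show "\<exists>\<psi>. pure_fc \<psi> \<and> fv \<psi> \<subseteq> {x} \<and> (\<forall>w \<sigma> u. \<sigma> x = Some u \<longrightarrow> u \<in> facs w \<longrightarrow> u \<in> D' \<longrightarrow> sat w \<sigma> \<psi> = P u)"
  proof (rule exI[of _ p], intro conjI allI impI)
    show "pure_fc p" "fv p \<subseteq> {x}" using p by auto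
    fix w \<sigma> u assume h: "\<sigma> x = Some u" "u \<in> facs w" "u \<in> D'"
    then have "u \<in> D" using assms(1) by blast
    then show "sat w \<sigma> p = P u" using p h by blast
  qed
qed

lemma defs_cong: assumes "defs D P" "\<And>u. u \<in> D \<Longrightarrow> P u = Q u" shows "defs D Q"
  unfolding defs_def
proof (intro allI)
  fix x
  obtain p where p: "pure_fc p \<and> fv p \<subseteq> {x} \<and> (\<forall>w \<sigma> u. \<sigma> x = Some u \<longrightarrow> u \<in> facs w \<longrightarrow> u \<in> D \<longrightarrow> sat w \<sigma> p = P u)"
    using assms(1) unfolding defs_def by blast
  show "\<exists>\<psi>. pure_fc \<psi> \<and> fv \<psi> \<subseteq> {x} \<and> (\<forall>w \<sigma> u. \<sigma> x = Some u \<longrightarrow> u \<in> facs w \<longrightarrow> u \<in> D \<longrightarrow> sat w \<sigma> \<psi> = Q u)"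
  proof (rule exI[of _ p], intro conjI allI impI)
    show "pure_fc p" "fv p \<subseteq> {x}" using p by auto
    fix w \<sigma> u assume h: "\<sigma> x = Some u" "u \<in> facs w" "u \<in> D"
    then have "sat w \<sigma> p = P u" using p by blast
    then show "sat w \<sigma> p = Q u" using assms(2) h(3) by simp
  qed
qed

lemma defs_Bex: "finite S \<Longrightarrow> (\<And>s. s \<in> S \<Longrightarrow> defs D (P s)) \<Longrightarrow> defs D (\<lambda>u. \<exists>s\<in>S. P s u)"
proof (induction S rule: finite_induct)
  case empty
  then show ?case using defs_const[of D False] by simp
next
  case (insert x F)
  have h1: "defs D (P x)" using insert by simp
  have h2: "defs D (\<lambda>u. \<exists>s\<in>F. P s u)" using insert by simp
  have "defs D (\<lambda>u. P x u \<or> (\<exists>s\<in>F. P s u))" using defs_disj[OF h1 h2] .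
  then show ?case by (rule defs_cong) auto
qed

lemma word_fm: "\<exists>\<psi>. pure_fc \<psi> \<and> fv \<psi> \<subseteq> {x} \<and>
     (\<forall>w \<sigma> u. \<sigma> x = Some u \<longrightarrow> u \<in> facs w \<longrightarrow> (sat w \<sigma> \<psi> \<longleftrightarrow> u = s))"
proof (induction s arbitrary: x)
  case Nil
  show ?case
    by (rule exI[of _ "Cat (Var x) Eps Eps"]) (auto simp: facs_Nil)
next
  case (Cons a s)
  obtain p where p1: "pure_fc p" and p2: "fv p \<subseteq> {Suc x}" and
    p3: "\<And>w \<sigma> u. \<sigma> (Suc x) = Some u \<Longrightarrow> u \<in> facs w \<Longrightarrow> sat w \<sigma> p = (u = s)"
    using Cons[of "Suc x"] by blast
  show ?case
  proof (rule exI[of _ "Ex (Suc x) (Conj (Cat (Var x) (Let a) (Var (Suc x))) p)"], intro conjI allI impI)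
    show "pure_fc (Ex (Suc x) (Conj (Cat (Var x) (Let a) (Var (Suc x))) p))" using p1 by simp
    show "fv (Ex (Suc x) (Conj (Cat (Var x) (Let a) (Var (Suc x))) p)) \<subseteq> {x}" using p2 by auto
    fix w :: "'a list" and \<sigma> u assume u: "\<sigma> x = Some u" "u \<in> facs w"
    show "sat w \<sigma> (Ex (Suc x) (Conj (Cat (Var x) (Let a) (Var (Suc x))) p)) = (u = a # s)"
    proof
      assume "sat w \<sigma> (Ex (Suc x) (Conj (Cat (Var x) (Let a) (Var (Suc x))) p))"
      then obtain v where v: "v \<in> facs w" "sat w (\<sigma>(Suc x := Some v)) (Cat (Var x) (Let a) (Var (Suc x)))"
        "sat w (\<sigma>(Suc x := Some v)) p" by (simp only: sat.simps(4) sat.simps(6)) blast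
      have "v = s" using p3[of "\<sigma>(Suc x := Some v)" v w] v(1,3) by simp
      from v(2) have "\<sigma> x = Some (a # v)" by (simp split: if_splits)
      with u(1) \<open>v = s\<close> show "u = a # s" by simp
    next
      assume h: "u = a # s"
      then have s: "s \<in> facs w" "[a] \<in> facs w" using u(2) facs_app[of "[a]" s w] by auto
      have "a \<in> set w" using s(2) by (rule facs_letter2)
      have c1: "sat w (\<sigma>(Suc x := Some s)) p" using p3[of "\<sigma>(Suc x := Some s)" s w] s by simp
      have c2: "sat w (\<sigma>(Suc x := Some s)) (Cat (Var x) (Let a) (Var (Suc x)))"
        using u h s \<open>a \<in> set w\<close> by simp
      have "sat w (\<sigma>(Suc x := Some s)) (Conj (Cat (Var x) (Let a) (Var (Suc x))) p)"
        using c1 c2 by simp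
      then show "sat w \<sigma> (Ex (Suc x) (Conj (Cat (Var x) (Let a) (Var (Suc x))) p))"
        using s(1) by (simp only: sat.simps) blast
    qed
  qed
qed

lemma defs_word: "defs D (\<lambda>u. u = s)"
  unfolding defs_def
proof
  fix x
  obtain p where p1: "pure_fc p" and p2: "fv p \<subseteq> {x}" and
    p3: "\<forall>w \<sigma> u. \<sigma> x = Some u \<longrightarrow> u \<in> facs w \<longrightarrow> sat w \<sigma> p = (u = s)"
    using word_fm[of x s] by blast
  show "\<exists>\<psi>. pure_fc \<psi> \<and> fv \<psi> \<subseteq> {x} \<and> (\<forall>w \<sigma> u. \<sigma> x = Some u \<longrightarrow> u \<in> facs w \<longrightarrow> u \<in> D \<longrightarrow> sat w \<sigma> \<psi> = (u = s))"
    using p1 p2 p3 by blast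
qed



lemma defs_split:
  assumes A: "defs DA A" and B: "defs DB B"
    and D: "\<And>x p y. x \<in> D \<Longrightarrow> x = p @ y \<Longrightarrow> p \<in> DA \<and> y \<in> DB"
  shows "defs D (\<lambda>x. \<exists>p y. x = p @ y \<and> A p \<and> B y)"
  unfolding defs_def
proof
  fix x :: nat
  obtain a where a1: "pure_fc a" and a2: "fv a \<subseteq> {Suc x}" and
    a3': "\<And>w \<sigma> u. \<sigma> (Suc x) = Some u \<Longrightarrow> u \<in> facs w \<Longrightarrow> u \<in> DA \<Longrightarrow> sat w \<sigma> a = A u"
    using defsE[OF A, of "Suc x"] by metis
  obtain b where b1: "pure_fc b" and b2: "fv b \<subseteq> {Suc (Suc x)}" and
    b3': "\<And>w \<sigma> u. \<sigma> (Suc (Suc x)) = Some u \<Longrightarrow> u \<in> facs w \<Longrightarrow> u \<in> DB \<Longrightarrow> sat w \<sigma> b = B u"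
    using defsE[OF B, of "Suc (Suc x)"] by metis
  have a3: "\<forall>w \<sigma> u. \<sigma> (Suc x) = Some u \<longrightarrow> u \<in> facs w \<longrightarrow> u \<in> DA \<longrightarrow> sat w \<sigma> a = A u"
    using a3' by simp
  have b3: "\<forall>w \<sigma> u. \<sigma> (Suc (Suc x)) = Some u \<longrightarrow> u \<in> facs w \<longrightarrow> u \<in> DB \<longrightarrow> sat w \<sigma> b = B u"
    using b3' by simp
  let ?f = "Ex (Suc x) (Ex (Suc (Suc x)) (Conj (Cat (Var x) (Var (Suc x)) (Var (Suc (Suc x)))) (Conj a b)))"
  show "\<exists>\<psi>. pure_fc \<psi> \<and> fv \<psi> \<subseteq> {x} \<and> (\<forall>w \<sigma> u. \<sigma> x = Some u \<longrightarrow> u \<in> facs w \<longrightarrow> u \<in> D \<longrightarrow> sat w \<sigma> \<psi> = (\<exists>p y. u = p @ y \<and> A p \<and> B y))"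
  proof (rule exI[of _ ?f], intro conjI allI impI)
    show "pure_fc ?f" using a1 b1 by simp
    show "fv ?f \<subseteq> {x}" using a2 b2 by auto
    fix w \<sigma> u assume h: "\<sigma> x = Some u" "u \<in> facs w" "u \<in> D"
    show "sat w \<sigma> ?f = (\<exists>p y. u = p @ y \<and> A p \<and> B y)"
    proof
      assume "sat w \<sigma> ?f"
      then obtain pv yv where pv: "pv \<in> facs w" "yv \<in> facs w" and
        c: "sat w (\<sigma>(Suc x := Some pv, Suc (Suc x) := Some yv)) (Cat (Var x) (Var (Suc x)) (Var (Suc (Suc x))))" and
        ca: "sat w (\<sigma>(Suc x := Some pv, Suc (Suc x) := Some yv)) a" and
        cb: "sat w (\<sigma>(Suc x := Some pv, Suc (Suc x) := Some yv)) b"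
        by (simp only: sat.simps(4) sat.simps(6)) blast
      from c have u: "u = pv @ yv" using h(1) by simp
      have d: "pv \<in> DA" "yv \<in> DB" using D h(3) u by blast+
      have "A pv" using a3[rule_format, of "\<sigma>(Suc x := Some pv, Suc (Suc x) := Some yv)" pv w] ca pv(1) d(1) by simp
      moreover have "B yv" using b3[rule_format, of "\<sigma>(Suc x := Some pv, Suc (Suc x) := Some yv)" yv w] cb pv(2) d(2) by simp
      ultimately show "\<exists>p y. u = p @ y \<and> A p \<and> B y" using u by blast
    next
      assume "\<exists>p y. u = p @ y \<and> A p \<and> B y"
      then obtain pv yv where u: "u = pv @ yv" and ab: "A pv" "B yv" by blast
      have pv: "pv \<in> facs w" "yv \<in> facs w" using facs_app h(2) u by blast+
      have d: "pv \<in> DA" "yv \<in> DB" using D h(3) u by blast+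
      have ca: "sat w (\<sigma>(Suc x := Some pv, Suc (Suc x) := Some yv)) a"
        using a3[rule_format, of "\<sigma>(Suc x := Some pv, Suc (Suc x) := Some yv)" pv w] ab pv(1) d(1) by simp
      have cb: "sat w (\<sigma>(Suc x := Some pv, Suc (Suc x) := Some yv)) b"
        using b3[rule_format, of "\<sigma>(Suc x := Some pv, Suc (Suc x) := Some yv)" yv w] ab pv(2) d(2) by simp
      have c: "sat w (\<sigma>(Suc x := Some pv, Suc (Suc x) := Some yv)) (Cat (Var x) (Var (Suc x)) (Var (Suc (Suc x))))"
        using h u pv by simp
      have "sat w (\<sigma>(Suc x := Some pv, Suc (Suc x) := Some yv)) (Conj (Cat (Var x) (Var (Suc x)) (Var (Suc (Suc x)))) (Conj a b))"
        using c ca cb by simp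
      then show "sat w \<sigma> ?f" using pv by (simp only: sat.simps(6)) blast
    qed
  qed
qed

lemma pw_add: "pw t (i + j) = pw t i @ pw t j"
  by (simp add: replicate_add)

lemma pw_Suc2: "pw t (Suc i) = pw t i @ t"
  using pw_add[where t=t and i=i and j=1] by simp

lemma pw_mult: "pw (pw t i) j = pw t (i * j)"
proof (induction j)
  case 0 then show ?case by simp
next
  case (Suc j)
  have "pw (pw t i) (Suc j) = pw t i @ pw t (i * j)" using Suc by simp
  also have "\<dots> = pw t (i + i * j)" by (simp add: pw_add)
  finally show ?case by simp
qed

lemma pw_len: "length (pw t i) = i * length t"
  by (induction i) auto

lemma pow_fm: "x \<noteq> y \<Longrightarrow> \<exists>\<psi>. pure_fc \<psi> \<and> fv \<psi> \<subseteq> {x, y} \<and>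
   (\<forall>w \<sigma> u v. \<sigma> x = Some u \<longrightarrow> \<sigma> y = Some v \<longrightarrow> u \<in> facs w \<longrightarrow> v \<in> facs w \<longrightarrow> (sat w \<sigma> \<psi> \<longleftrightarrow> u = pw v (Suc n)))"
proof (induction n arbitrary: x y)
  case 0
  show ?case
    by (rule exI[of _ "Cat (Var x) (Var y) Eps"]) (auto simp: facs_Nil)
next
  case (Suc n)
  define t where "t = x + y + 1"
  have tx: "t \<noteq> x" "t \<noteq> y" unfolding t_def by auto
  from Suc.IH[OF tx(2)] obtain q :: "'a fcform" where q: "pure_fc q \<and> fv q \<subseteq> {t, y} \<and>
    (\<forall>w \<sigma> u v. \<sigma> t = Some u \<longrightarrow> \<sigma> y = Some v \<longrightarrow> u \<in> facs w \<longrightarrow> v \<in> facs w \<longrightarrow> (sat w \<sigma> q \<longleftrightarrow> u = pw v (Suc n)))" ..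
  note q1 = q[THEN conjunct1] and q2 = q[THEN conjunct2, THEN conjunct1]
    and q3 = q[THEN conjunct2, THEN conjunct2]
  let ?f = "Ex t (Conj (Cat (Var x) (Var y) (Var t)) q)"
  show ?case
  proof (rule exI[of _ ?f], intro conjI allI impI)
    show "pure_fc ?f" using q1 by simp
    show "fv ?f \<subseteq> {x, y}" using q2 by auto
    fix w :: "'a list" and \<sigma> u v assume h: "\<sigma> x = Some u" "\<sigma> y = Some v" "u \<in> facs w" "v \<in> facs w"
    show "sat w \<sigma> ?f = (u = pw v (Suc (Suc n)))"
    proof
      assume "sat w \<sigma> ?f"
      then obtain c where c: "c \<in> facs w" "sat w (\<sigma>(t := Some c)) (Cat (Var x) (Var y) (Var t))"
        "sat w (\<sigma>(t := Some c)) q" by (simp only: sat.simps(4) sat.simps(6)) blast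
      have "u = v @ c" using c(2) h tx by simp
      moreover have "c = pw v (Suc n)" using q3[rule_format, of "\<sigma>(t := Some c)" c v w] c h tx by simp
      ultimately show "u = pw v (Suc (Suc n))" by simp
    next
      assume u: "u = pw v (Suc (Suc n))"
      let ?c = "pw v (Suc n)"
      have uc: "u = v @ ?c" using u by simp
      have cf: "?c \<in> facs w" using facs_app[of v ?c w] h(3) uc by simp
      have "sat w (\<sigma>(t := Some ?c)) q" using q3[rule_format, of "\<sigma>(t := Some ?c)" ?c v w] cf h tx by simp
      moreover have "sat w (\<sigma>(t := Some ?c)) (Cat (Var x) (Var y) (Var t))" using h tx uc cf by simp
      ultimately have "sat w (\<sigma>(t := Some ?c)) (Conj (Cat (Var x) (Var y) (Var t)) q)" by simp
      then show "sat w \<sigma> ?f" using cf by (simp only: sat.simps(6)) blast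
    qed
  qed
qed

lemma defs_pow:
  assumes e: "1 \<le> e" and C: "defs UNIV C"
  shows "defs D (\<lambda>z. \<exists>y. z = pw y e \<and> C y)"
  unfolding defs_def
proof
  fix x :: nat
  obtain n where n: "e = Suc n" using e by (cases e) auto
  have xx: "x \<noteq> Suc x" by simp
  from pow_fm[OF xx, of n] obtain p :: "'a fcform" where p: "pure_fc p \<and> fv p \<subseteq> {x, Suc x} \<and>
    (\<forall>w \<sigma> u v. \<sigma> x = Some u \<longrightarrow> \<sigma> (Suc x) = Some v \<longrightarrow> u \<in> facs w \<longrightarrow> v \<in> facs w \<longrightarrow> (sat w \<sigma> p \<longleftrightarrow> u = pw v (Suc n)))" ..
  note p1 = p[THEN conjunct1] and p2 = p[THEN conjunct2, THEN conjunct1]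
    and p3 = p[THEN conjunct2, THEN conjunct2]
  obtain c where c1: "pure_fc c" and c2: "fv c \<subseteq> {Suc x}" and
    c3': "\<And>w \<sigma> u. \<sigma> (Suc x) = Some u \<Longrightarrow> u \<in> facs w \<Longrightarrow> u \<in> UNIV \<Longrightarrow> sat w \<sigma> c = C u"
    using defsE[OF C, of "Suc x"] by metis
  have c3: "\<forall>w \<sigma> u. \<sigma> (Suc x) = Some u \<longrightarrow> u \<in> facs w \<longrightarrow> u \<in> UNIV \<longrightarrow> sat w \<sigma> c = C u"
    using c3' by simp
  let ?f = "Ex (Suc x) (Conj p c)"
  show "\<exists>\<psi>. pure_fc \<psi> \<and> fv \<psi> \<subseteq> {x} \<and> (\<forall>w \<sigma> u. \<sigma> x = Some u \<longrightarrow> u \<in> facs w \<longrightarrow> u \<in> D \<longrightarrow> sat w \<sigma> \<psi> = (\<exists>y. u = pw y e \<and> C y))"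
  proof (rule exI[of _ ?f], intro conjI allI impI)
    show "pure_fc ?f" using p1 c1 by simp
    show "fv ?f \<subseteq> {x}" using p2 c2 by auto
    fix w \<sigma> u assume h: "\<sigma> x = Some u" "u \<in> facs w" "u \<in> D"
    show "sat w \<sigma> ?f = (\<exists>y. u = pw y e \<and> C y)"
    proof
      assume "sat w \<sigma> ?f"
      then obtain v where v: "v \<in> facs w" "sat w (\<sigma>(Suc x := Some v)) p" "sat w (\<sigma>(Suc x := Some v)) c"
        by (simp only: sat.simps(4) sat.simps(6)) blast
      have "u = pw v e" using p3[rule_format, of "\<sigma>(Suc x := Some v)" u v w] v h n by simp
      moreover have "C v" using c3[rule_format, of "\<sigma>(Suc x := Some v)" v w] v by simp
      ultimately show "\<exists>y. u = pw y e \<and> C y" by blast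
    next
      assume "\<exists>y. u = pw y e \<and> C y"
      then obtain v where v: "u = pw v e" "C v" by blast
      have "u = v @ pw v n" using v n by simp
      then have vf: "v \<in> facs w" using facs_app[of v "pw v n" w] h(2) by simp
      have "sat w (\<sigma>(Suc x := Some v)) p" using p3[rule_format, of "\<sigma>(Suc x := Some v)" u v w] v h n vf by simp
      moreover have "sat w (\<sigma>(Suc x := Some v)) c" using c3[rule_format, of "\<sigma>(Suc x := Some v)" v w] v vf by simp
      ultimately have "sat w (\<sigma>(Suc x := Some v)) (Conj p c)" by simp
      then show "sat w \<sigma> ?f" using vf by (simp only: sat.simps(6)) blast
    qed
  qed
qed

lemma defs_comm: "defs D (\<lambda>y. \<exists>y'. y = r @ y' \<and> y = y' @ r)"
  unfolding defs_def
proof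
  fix x :: nat
  from word_fm[of "Suc x" r] obtain g where g: "pure_fc g \<and> fv g \<subseteq> {Suc x} \<and>
    (\<forall>w \<sigma> u. \<sigma> (Suc x) = Some u \<longrightarrow> u \<in> facs w \<longrightarrow> sat w \<sigma> g = (u = r))" ..
  note g1 = g[THEN conjunct1] and g2 = g[THEN conjunct2, THEN conjunct1]
    and g3 = g[THEN conjunct2, THEN conjunct2]
  let ?c = "Conj (Cat (Var x) (Var (Suc x)) (Var (Suc (Suc x)))) (Cat (Var x) (Var (Suc (Suc x))) (Var (Suc x)))"
  let ?f = "Ex (Suc x) (Conj g (Ex (Suc (Suc x)) ?c))"
  show "\<exists>\<psi>. pure_fc \<psi> \<and> fv \<psi> \<subseteq> {x} \<and> (\<forall>w \<sigma> u. \<sigma> x = Some u \<longrightarrow> u \<in> facs w \<longrightarrow> u \<in> D \<longrightarrow> sat w \<sigma> \<psi> = (\<exists>y'. u = r @ y' \<and> u = y' @ r))"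
  proof (rule exI[of _ ?f], intro conjI allI impI)
    show "pure_fc ?f" using g1 by simp
    show "fv ?f \<subseteq> {x}" using g2 by auto
    fix w \<sigma> u assume h: "\<sigma> x = Some u" "u \<in> facs w" "u \<in> D"
    show "sat w \<sigma> ?f = (\<exists>y'. u = r @ y' \<and> u = y' @ r)"
    proof
      assume "sat w \<sigma> ?f"
      then obtain gv yv where v: "gv \<in> facs w" "sat w (\<sigma>(Suc x := Some gv)) g"
        "sat w (\<sigma>(Suc x := Some gv, Suc (Suc x) := Some yv)) ?c"
        by (simp only: sat.simps(4) sat.simps(6)) blast
      have "gv = r" using g3[rule_format, of "\<sigma>(Suc x := Some gv)" gv w] v by simp
      with v(3) h show "\<exists>y'. u = r @ y' \<and> u = y' @ r" by auto
    next
      assume "\<exists>y'. u = r @ y' \<and> u = y' @ r"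
      then obtain yv where u: "u = r @ yv" "u = yv @ r" by blast
      have f: "r \<in> facs w" "yv \<in> facs w" using facs_app h(2) u(1) by blast+
      have "sat w (\<sigma>(Suc x := Some r)) g" using g3[rule_format, of "\<sigma>(Suc x := Some r)" r w] f by simp
      moreover have "sat w (\<sigma>(Suc x := Some r, Suc (Suc x) := Some yv)) ?c" using h u f by simp
      ultimately have "sat w (\<sigma>(Suc x := Some r)) (Conj g (Ex (Suc (Suc x)) ?c))"
        using f by (simp only: sat.simps(4) sat.simps(6)) blast
      then show "sat w \<sigma> ?f" using f by (simp only: sat.simps(6)) blast
    qed
  qed
qed



lemma comm_pow: "x @ y = y @ x \<Longrightarrow> \<exists>t i j. x = pw t i \<and> y = pw t j"
proof (induction "length x + length y" arbitrary: x y rule: less_induct)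
  case less
  show ?case
  proof (cases "x = []")
    case True
    then have "x = pw y 0 \<and> y = pw y 1" by simp
    then show ?thesis by blast
  next
    case xne: False
    show ?thesis
    proof (cases "y = []")
      case True
      then have "x = pw x 1 \<and> y = pw x 0" by simp
      then show ?thesis by blast
    next
      case yne: False
      show ?thesis
      proof (cases "length x \<le> length y")
        case True
        have "take (length x) (x @ y) = take (length x) (y @ x)" using less.prems by simp
        hence xy: "x = take (length x) y" using True by simp
        define y2 where "y2 = drop (length x) y"
        have y: "y = x @ y2" using xy y2_def by (metis append_take_drop_id)
        have c: "x @ y2 = y2 @ x" using less.prems y by simp
        have "length x + length y2 < length x + length y" using y xne by simp
        from less.hyps[OF this c] obtain t i j where "x = pw t i" "y2 = pw t j" by blast
        then have "x = pw t i \<and> y = pw t (i + j)" using y by (simp add: pw_add)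
        then show ?thesis by blast
      next
        case False
        have "take (length y) (x @ y) = take (length y) (y @ x)" using less.prems by simp
        hence yx: "y = take (length y) x" using False by simp
        define x2 where "x2 = drop (length y) x"
        have x: "x = y @ x2" using yx x2_def by (metis append_take_drop_id)
        have c: "x2 @ y = y @ x2" using less.prems x by simp
        have "length x2 + length y < length x + length y" using x yne by simp
        from less.hyps[OF this c] obtain t i j where "x2 = pw t i" "y = pw t j" by blast
        then have "x = pw t (j + i) \<and> y = pw t j" using x by (simp add: pw_add)
        then show ?thesis by blast
      qed
    qed
  qed
qed

definition prim :: "'a list \<Rightarrow> bool" where
  "prim r \<longleftrightarrow> r \<noteq> [] \<and> (\<forall>t k. r = pw t k \<longrightarrow> k = 1)"

lemma prim_comm: assumes "prim r" "y @ r = r @ y" shows "\<exists>m. y = pw r m"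
proof -
  obtain t i j where t: "y = pw t i" "r = pw t j" using comm_pow[OF assms(2)] by blast
  then have "j = 1" using assms(1) unfolding prim_def by blast
  then show ?thesis using t by auto
qed

lemma prim_root: assumes "u \<noteq> []" shows "\<exists>r e. prim r \<and> 1 \<le> e \<and> u = pw r e"
proof -
  define Q where "Q = (\<lambda>n. \<exists>t k. length t = n \<and> t \<noteq> [] \<and> u = pw t k)"
  have ex: "Q (length u)" unfolding Q_def using assms by (rule_tac x=u in exI, rule_tac x=1 in exI) simp
  define n where "n = (LEAST n. Q n)"
  have "Q n" unfolding n_def using ex by (rule LeastI)
  then obtain t k where t: "length t = n" "t \<noteq> []" "u = pw t k" unfolding Q_def by blast
  have min: "\<And>s m. s \<noteq> [] \<Longrightarrow> u = pw s m \<Longrightarrow> n \<le> length s"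
  proof -
    fix s m assume "s \<noteq> []" "u = pw s m"
    then have "Q (length s)" unfolding Q_def by blast
    then show "n \<le> length s" unfolding n_def by (rule Least_le)
  qed
  have "prim t"
    unfolding prim_def
  proof (intro conjI allI impI)
    show "t \<noteq> []" by fact
    fix s m assume tm: "t = pw s m"
    show "m = 1"
    proof (rule ccontr)
      assume m1: "m \<noteq> 1"
      have m0: "m \<noteq> 0" using tm t(2) by auto
      have s0: "s \<noteq> []" using tm t(2) by auto
      have "u = pw s (m * k)" using t(3) tm by (simp add: pw_mult)
      then have "n \<le> length s" using min s0 by blast
      moreover have "length t = m * length s" using tm by (simp add: pw_len)
      moreover have "m \<ge> 2" using m0 m1 by simp
      ultimately show False using t(1) s0 by (simp add: mult_le_cancel2)
    qed
  qed
  moreover have "1 \<le> k" using t assms by (cases k) auto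
  ultimately show ?thesis using t(3) by blast
qed

lemma wstar_iff: "z \<in> wstar u \<longleftrightarrow> (\<exists>k. z = pw u k)"
  unfolding wstar_def by blast

lemma star_char:
  assumes r: "prim r" and e: "1 \<le> e"
  shows "z \<in> wstar (pw r e) \<longleftrightarrow> z = [] \<or> (\<exists>y. z = pw y e \<and> (\<exists>y'. y = r @ y' \<and> y = y' @ r))"
proof
  assume "z \<in> wstar (pw r e)"
  then obtain k where k: "z = pw (pw r e) k" unfolding wstar_iff by blast
  show "z = [] \<or> (\<exists>y. z = pw y e \<and> (\<exists>y'. y = r @ y' \<and> y = y' @ r))"
  proof (cases k)
    case 0 then show ?thesis using k by simp
  next
    case (Suc k')
    have "z = pw (pw r k) e" using k by (simp add: pw_mult mult.commute)
    moreover have "pw r k = r @ pw r k'" using Suc by simp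
    moreover have "pw r k = pw r k' @ r" unfolding Suc by (rule pw_Suc2)
    ultimately show ?thesis by blast
  qed
next
  assume "z = [] \<or> (\<exists>y. z = pw y e \<and> (\<exists>y'. y = r @ y' \<and> y = y' @ r))"
  then show "z \<in> wstar (pw r e)"
  proof
    assume "z = []"
    then have "z = pw (pw r e) 0" by simp
    then show ?thesis unfolding wstar_iff by blast
  next
    assume "\<exists>y. z = pw y e \<and> (\<exists>y'. y = r @ y' \<and> y = y' @ r)"
    then obtain y y' where h: "z = pw y e" "y = r @ y'" "y = y' @ r" by blast
    then have "y' @ r = r @ y'" by simp
    then obtain m where "y' = pw r m" using prim_comm[OF r] by blast
    then have ym: "y = pw r (Suc m)" using h by simp
    have "z = pw (pw r (Suc m)) e" using h(1) ym by (simp only:)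
    also have "\<dots> = pw r (Suc m * e)" by (rule pw_mult)
    also have "\<dots> = pw r (e * Suc m)" by (simp only: mult.commute)
    also have "\<dots> = pw (pw r e) (Suc m)" by (rule pw_mult[symmetric])
    finally have "z = pw (pw r e) (Suc m)" .
    then show ?thesis unfolding wstar_iff by blast
  qed
qed

lemma defs_star: "defs D (\<lambda>z. z \<in> wstar u)"
proof (cases "u = []")
  case True
  have "defs D (\<lambda>z. z = [])" by (rule defs_word)
  then show ?thesis by (rule defs_cong) (simp add: True wstar_iff)
next
  case False
  then obtain r e where re: "prim r" "1 \<le> e" "u = pw r e" using prim_root by blast
  have "defs D (\<lambda>z. z = [] \<or> (\<exists>y. z = pw y e \<and> (\<exists>y'. y = r @ y' \<and> y = y' @ r)))"
    by (rule defs_disj[OF defs_word defs_pow[OF re(2) defs_comm]])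
  then show ?thesis by (rule defs_cong) (simp only: re(3) star_char[OF re(1) re(2)])
qed



definition quot :: "'a list \<Rightarrow> 'a list set \<Rightarrow> 'a list set" where
  "quot u L = {v. u @ v \<in> L}"

definition reg :: "'a list set \<Rightarrow> bool" where
  "reg L \<longleftrightarrow> finite (range (\<lambda>u. quot u L))"

lemma quot_app: "quot (u @ v) L = quot v (quot u L)"
  by (simp add: quot_def)

lemma quot_Nil: "quot [] L = L"
  by (simp add: quot_def)

lemma reg_by_key:
  assumes "\<And>u. quot u L = F (k u)" "\<And>u. k u \<in> K" "finite K"
  shows "reg L"
proof -
  have "range (\<lambda>u. quot u L) \<subseteq> F ` K" using assms(1,2) by auto
  then show ?thesis unfolding reg_def using assms(3) finite_subset by blast
qed

lemma reg_quot: "reg L \<Longrightarrow> reg (quot u L)"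
  unfolding reg_def
proof -
  assume f: "finite (range (\<lambda>u. quot u L))"
  have "range (\<lambda>v. quot v (quot u L)) \<subseteq> range (\<lambda>u. quot u L)"
    by (auto simp: quot_app[symmetric])
  then show "finite (range (\<lambda>v. quot v (quot u L)))" using f finite_subset by blast
qed

lemma reg_level: "reg L \<Longrightarrow> reg {p. quot p L = q}"
proof -
  assume r: "reg L"
  show ?thesis
  proof (rule reg_by_key[where F = "\<lambda>X. {p. quot p X = q}" and k = "\<lambda>u. quot u L"])
    fix u
    show "quot u {p. quot p L = q} = {p. quot p (quot u L) = q}"
      by (simp add: quot_def quot_app[symmetric])
    show "quot u L \<in> range (\<lambda>u. quot u L)" by simp
    show "finite (range (\<lambda>u. quot u L))" using r unfolding reg_def .
  qed
qed

lemma reg_UNIV: "reg UNIV"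
  by (rule reg_by_key[where F = "\<lambda>_. UNIV" and k = "\<lambda>_. ()" and K = "{()}"]) (auto simp: quot_def)

lemma lpow_lstar: "x \<in> lpow A n \<Longrightarrow> x \<in> lstar A"
  unfolding lstar_def by blast

lemma lstar_Nil: "[] \<in> lstar A"
  using lpow_lstar[of "[]" A 0] by simp

lemma lstar_cons: "a \<in> A \<Longrightarrow> x \<in> lstar A \<Longrightarrow> a @ x \<in> lstar A"
proof -
  assume "a \<in> A" "x \<in> lstar A"
  then obtain n where "x \<in> lpow A n" unfolding lstar_def by blast
  then have "a @ x \<in> lpow A (Suc n)" using \<open>a \<in> A\<close> by (auto simp: conc_def)
  then show ?thesis by (rule lpow_lstar)
qed

lemma lstar_app: "x \<in> lstar A \<Longrightarrow> y \<in> lstar A \<Longrightarrow> x @ y \<in> lstar A"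
proof -
  assume "x \<in> lstar A" "y \<in> lstar A"
  then obtain n where "x \<in> lpow A n" unfolding lstar_def by blast
  then show ?thesis
  proof (induction n arbitrary: x)
    case 0 then show ?case using \<open>y \<in> lstar A\<close> by simp
  next
    case (Suc n)
    then obtain a x' where "x = a @ x'" "a \<in> A" "x' \<in> lpow A n" by (auto simp: conc_def)
    then show ?case using Suc.IH lstar_cons by fastforce
  qed
qed

lemma star_quot_split:
  "u \<noteq> [] \<Longrightarrow> u @ v \<in> lpow A n \<Longrightarrow>
   \<exists>u1 u2 v1 v2. u = u1 @ u2 \<and> u1 \<in> lstar A \<and> u2 \<noteq> [] \<and> u2 @ v1 \<in> A \<and> v2 \<in> lstar A \<and> v = v1 @ v2"
proof (induction n arbitrary: u v)
  case 0 then show ?case by simp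
next
  case (Suc n)
  then obtain a x where ax: "u @ v = a @ x" "a \<in> A" "x \<in> lpow A n" by (auto simp: conc_def)
  then obtain us where us: "(u = a @ us \<and> us @ v = x) \<or> (u @ us = a \<and> v = us @ x)"
    by (auto simp: append_eq_append_conv2)
  then show ?case
  proof
    assume h: "u = a @ us \<and> us @ v = x"
    show ?case
    proof (cases "us = []")
      case True
      then have "u = [] @ a \<and> [] \<in> lstar A \<and> a \<noteq> [] \<and> a @ [] \<in> A \<and> v \<in> lstar A \<and> v = [] @ v"
        using h ax Suc.prems lstar_Nil lpow_lstar by auto
      then show ?thesis by blast
    next
      case False
      from Suc.IH[OF False] h obtain u1 u2 v1 v2 where
        "us = u1 @ u2" "u1 \<in> lstar A" "u2 \<noteq> []" "u2 @ v1 \<in> A" "v2 \<in> lstar A" "v = v1 @ v2"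
        using ax by blast
      then have "u = (a @ u1) @ u2 \<and> a @ u1 \<in> lstar A \<and> u2 \<noteq> [] \<and> u2 @ v1 \<in> A \<and> v2 \<in> lstar A \<and> v = v1 @ v2"
        using h ax lstar_cons by auto
      then show ?thesis by blast
    qed
  next
    assume h: "u @ us = a \<and> v = us @ x"
    then have "u = [] @ u \<and> [] \<in> lstar A \<and> u \<noteq> [] \<and> u @ us \<in> A \<and> x \<in> lstar A \<and> v = us @ x"
      using ax Suc.prems lstar_Nil lpow_lstar by auto
    then show ?thesis by blast
  qed
qed

lemma reg_rlang: "reg (rlang r)"
proof (induction r)
  case RZero
  show ?case by (rule reg_by_key[where F = "\<lambda>_. {}" and k = "\<lambda>_. ()" and K = "{()}"]) (auto simp: quot_def)
next
  case REps
  show ?case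
    by (rule reg_by_key[where F = "\<lambda>b. if b then {[]} else {}" and k = "\<lambda>u. u = []" and K = UNIV])
      (auto simp: quot_def)
next
  case (RAtom a)
  show ?case
    by (rule reg_by_key[where F = "\<lambda>n::nat. if n = 0 then {[a]} else if n = 1 then {[]} else {}"
        and k = "\<lambda>u. if u = [] then 0 else if u = [a] then 1 else 2" and K = "{0, 1, 2}"])
      (auto simp: quot_def append_eq_Cons_conv)
next
  case (RPlus r s)
  show ?case
  proof (rule reg_by_key[where F = "\<lambda>(X, Y). X \<union> Y" and k = "\<lambda>u. (quot u (rlang r), quot u (rlang s))"
        and K = "range (\<lambda>u. quot u (rlang r)) \<times> range (\<lambda>u. quot u (rlang s))"])
    fix u
    show "quot u (rlang (RPlus r s)) = (case (quot u (rlang r), quot u (rlang s)) of (X, Y) \<Rightarrow> X \<union> Y)"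
      by (auto simp: quot_def)
    show "(quot u (rlang r), quot u (rlang s)) \<in> range (\<lambda>u. quot u (rlang r)) \<times> range (\<lambda>u. quot u (rlang s))"
      by simp
    show "finite (range (\<lambda>u. quot u (rlang r)) \<times> range (\<lambda>u. quot u (rlang s)))"
      using RPlus by (simp add: reg_def)
  qed
next
  case (RTimes r s)
  let ?A = "rlang r" and ?B = "rlang s"
  let ?G = "\<lambda>u. {quot u2 ?B | u1 u2. u = u1 @ u2 \<and> u1 \<in> ?A}"
  show ?case
  proof (rule reg_by_key[where F = "\<lambda>(X, S). conc X ?B \<union> \<Union> S" and k = "\<lambda>u. (quot u ?A, ?G u)"
        and K = "range (\<lambda>u. quot u ?A) \<times> Pow (range (\<lambda>u. quot u ?B))"])
    fix u
    show "quot u (rlang (RTimes r s)) = (case (quot u ?A, ?G u) of (X, S) \<Rightarrow> conc X ?B \<union> \<Union> S)"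
    proof (rule set_eqI)
      fix v
      have "v \<in> quot u (rlang (RTimes r s)) \<longleftrightarrow> (\<exists>a b. u @ v = a @ b \<and> a \<in> ?A \<and> b \<in> ?B)"
        by (auto simp: quot_def conc_def)
      also have "\<dots> \<longleftrightarrow> v \<in> conc (quot u ?A) ?B \<or> (\<exists>u1 u2. u = u1 @ u2 \<and> u1 \<in> ?A \<and> v \<in> quot u2 ?B)"
      proof
        assume "\<exists>a b. u @ v = a @ b \<and> a \<in> ?A \<and> b \<in> ?B"
        then obtain a b us where ab: "a \<in> ?A" "b \<in> ?B" "(u = a @ us \<and> us @ v = b) \<or> (u @ us = a \<and> v = us @ b)"
          by (auto simp: append_eq_append_conv2)
        then show "v \<in> conc (quot u ?A) ?B \<or> (\<exists>u1 u2. u = u1 @ u2 \<and> u1 \<in> ?A \<and> v \<in> quot u2 ?B)"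
          by (auto simp: quot_def conc_def)
      next
        assume "v \<in> conc (quot u ?A) ?B \<or> (\<exists>u1 u2. u = u1 @ u2 \<and> u1 \<in> ?A \<and> v \<in> quot u2 ?B)"
        then show "\<exists>a b. u @ v = a @ b \<and> a \<in> ?A \<and> b \<in> ?B"
          by (auto simp: quot_def conc_def) (metis append.assoc)+
      qed
      also have "\<dots> \<longleftrightarrow> v \<in> (case (quot u ?A, ?G u) of (X, S) \<Rightarrow> conc X ?B \<union> \<Union> S)"
        by auto
      finally show "v \<in> quot u (rlang (RTimes r s)) \<longleftrightarrow> v \<in> (case (quot u ?A, ?G u) of (X, S) \<Rightarrow> conc X ?B \<union> \<Union> S)" .
    qed
    show "(quot u ?A, ?G u) \<in> range (\<lambda>u. quot u ?A) \<times> Pow (range (\<lambda>u. quot u ?B))"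
      by auto
    show "finite (range (\<lambda>u. quot u ?A) \<times> Pow (range (\<lambda>u. quot u ?B)))"
      using RTimes by (simp add: reg_def)
  qed
next
  case (RStar r)
  let ?A = "rlang r"
  let ?H = "\<lambda>u. {quot u2 ?A | u1 u2. u = u1 @ u2 \<and> u1 \<in> lstar ?A \<and> u2 \<noteq> []}"
  show ?case
  proof (rule reg_by_key[where F = "\<lambda>(b, S). if b then lstar ?A else \<Union>X\<in>S. conc X (lstar ?A)"
        and k = "\<lambda>u. (u = [], ?H u)" and K = "(UNIV::bool set) \<times> Pow (range (\<lambda>u. quot u ?A))"])
    fix u
    show "quot u (rlang (RStar r)) = (case (u = [], ?H u) of (b, S) \<Rightarrow> if b then lstar ?A else \<Union>X\<in>S. conc X (lstar ?A))"
    proof (cases "u = []")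
      case True then show ?thesis by (simp add: quot_Nil)
    next
      case False
      have "v \<in> quot u (lstar ?A) \<longleftrightarrow> (\<exists>X\<in>?H u. v \<in> conc X (lstar ?A))" for v
      proof
        assume "v \<in> quot u (lstar ?A)"
        then obtain n where "u @ v \<in> lpow ?A n" unfolding quot_def lstar_def by blast
        from star_quot_split[OF False this] obtain u1 u2 v1 v2 where
          s: "u = u1 @ u2" "u1 \<in> lstar ?A" "u2 \<noteq> []" "u2 @ v1 \<in> ?A" "v2 \<in> lstar ?A" "v = v1 @ v2" by blast
        then have "quot u2 ?A \<in> ?H u" by blast
        moreover have "v \<in> conc (quot u2 ?A) (lstar ?A)" using s by (auto simp: quot_def conc_def)
        ultimately show "\<exists>X\<in>?H u. v \<in> conc X (lstar ?A)" by blast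
      next
        assume "\<exists>X\<in>?H u. v \<in> conc X (lstar ?A)"
        then obtain u1 u2 v1 v2 where s: "u = u1 @ u2" "u1 \<in> lstar ?A" "u2 @ v1 \<in> ?A" "v2 \<in> lstar ?A" "v = v1 @ v2"
          by (auto simp: quot_def conc_def)
        have "u2 @ v1 \<in> lstar ?A" using lstar_cons[OF s(3) lstar_Nil] by simp
        then have "(u2 @ v1) @ v2 \<in> lstar ?A" using s(4) lstar_app by blast
        then have "u1 @ ((u2 @ v1) @ v2) \<in> lstar ?A" using s(2) lstar_app by blast
        then show "v \<in> quot u (lstar ?A)" using s by (simp add: quot_def)
      qed
      then show ?thesis using False by auto
    qed
    show "(u = [], ?H u) \<in> (UNIV::bool set) \<times> Pow (range (\<lambda>u. quot u ?A))" by auto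
    show "finite ((UNIV::bool set) \<times> Pow (range (\<lambda>u. quot u ?A)))" using RStar unfolding reg_def
      by (intro finite_cartesian_product) (auto simp: UNIV_bool)
  qed
qed



definition Bl :: "'a list list \<Rightarrow> 'a list set" where
  "Bl ws = foldr (\<lambda>u A. conc (wstar u) A) ws {[]}"

lemma Bl_Nil[simp]: "Bl [] = {[]}" by (simp add: Bl_def)
lemma Bl_Cons[simp]: "Bl (w # ws) = conc (wstar w) (Bl ws)" by (simp add: Bl_def)

lemma defs_unary:
  assumes P: "reg P"
  shows "defs D (\<lambda>p. p \<in> wstar v \<and> p \<in> P)"
proof -
  define a where "a k = quot (pw v k) P" for k
  have aS: "a (Suc k) = quot v (a k)" for k
    unfolding a_def by (simp only: pw_Suc2 quot_app)
  have "range a \<subseteq> range (\<lambda>u. quot u P)" unfolding a_def by auto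
  then have fin: "finite (range a)" using P unfolding reg_def using finite_subset by blast
  have "\<not> inj a"
  proof
    assume "inj a"
    then have "finite (UNIV :: nat set)" using finite_imageD[OF fin] by blast
    then show False by simp
  qed
  then obtain i j where ij: "i \<noteq> j" "a i = a j" unfolding inj_def by blast
  obtain N c where Nc: "0 < c" "a (N + c) = a N"
  proof (cases "i < j")
    case True
    then show ?thesis using that[of "j - i" i] ij by simp
  next
    case False
    then show ?thesis using that[of "i - j" j] ij by simp
  qed
  have per1: "a (N + m + c) = a (N + m)" for m
  proof (induction m)
    case 0 then show ?case using Nc by simp
  next
    case (Suc m)
    have "a (N + Suc m + c) = a (Suc (N + m + c))" by simp
    also have "\<dots> = quot v (a (N + m + c))" by (rule aS)
    also have "\<dots> = quot v (a (N + m))" using Suc by simp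
    also have "\<dots> = a (Suc (N + m))" by (rule aS[symmetric])
    finally show ?case by simp
  qed
  have per: "a (N + r + q * c) = a (N + r)" for r q
  proof (induction q)
    case 0 then show ?case by simp
  next
    case (Suc q)
    have "a (N + r + Suc q * c) = a (N + (r + q * c) + c)" by (simp add: algebra_simps)
    also have "\<dots> = a (N + (r + q * c))" by (rule per1)
    also have "\<dots> = a (N + r)" using Suc by (simp add: algebra_simps)
    finally show ?case .
  qed
  have mem: "pw v k \<in> P \<longleftrightarrow> [] \<in> a k" for k unfolding a_def quot_def by simp
  let ?K = "{k. k < N \<and> [] \<in> a k}" and ?R = "{r. r < c \<and> [] \<in> a (N + r)}"
  have char: "p \<in> wstar v \<and> p \<in> P \<longleftrightarrow>
    ((\<exists>k\<in>?K. p = pw v k) \<or> (\<exists>r\<in>?R. \<exists>p' z. p = p' @ z \<and> p' = pw v (N + r) \<and> z \<in> wstar (pw v c)))" for p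
  proof
    assume "p \<in> wstar v \<and> p \<in> P"
    then obtain k where k: "p = pw v k" "[] \<in> a k" using mem unfolding wstar_iff by blast
    show "(\<exists>k\<in>?K. p = pw v k) \<or> (\<exists>r\<in>?R. \<exists>p' z. p = p' @ z \<and> p' = pw v (N + r) \<and> z \<in> wstar (pw v c))"
    proof (cases "k < N")
      case True then show ?thesis using k by blast
    next
      case False
      define r where "r = (k - N) mod c"
      define q where "q = (k - N) div c"
      have kk: "k = N + r + q * c" using False unfolding r_def q_def by simp
      have "r < c" unfolding r_def using Nc by simp
      moreover have "[] \<in> a (N + r)" using k(2) per[of r q] kk by simp
      moreover have "p = pw v (N + r) @ pw (pw v c) q"
        using k(1) kk by (simp add: pw_mult pw_add mult.commute)
      moreover have "pw (pw v c) q \<in> wstar (pw v c)" unfolding wstar_iff by blast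
      ultimately show ?thesis by blast
    qed
  next
    assume "(\<exists>k\<in>?K. p = pw v k) \<or> (\<exists>r\<in>?R. \<exists>p' z. p = p' @ z \<and> p' = pw v (N + r) \<and> z \<in> wstar (pw v c))"
    then show "p \<in> wstar v \<and> p \<in> P"
    proof
      assume "\<exists>k\<in>?K. p = pw v k"
      then show ?thesis using mem unfolding wstar_iff by blast
    next
      assume "\<exists>r\<in>?R. \<exists>p' z. p = p' @ z \<and> p' = pw v (N + r) \<and> z \<in> wstar (pw v c)"
      then obtain r q where rq: "r < c" "[] \<in> a (N + r)" "p = pw v (N + r) @ pw (pw v c) q"
        unfolding wstar_iff by blast
      have pp: "p = pw v (N + r + q * c)" using rq(3) by (simp add: pw_mult pw_add mult.commute)
      have "[] \<in> a (N + r + q * c)" using rq(2) per by simp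
      then show ?thesis using pp mem unfolding wstar_iff by blast
    qed
  qed
  have d1: "defs D (\<lambda>p. \<exists>k\<in>?K. p = pw v k)"
    by (rule defs_Bex) (simp_all add: defs_word)
  have d2: "defs D (\<lambda>p. \<exists>r\<in>?R. \<exists>p' z. p = p' @ z \<and> p' = pw v (N + r) \<and> z \<in> wstar (pw v c))"
  proof (rule defs_Bex)
    show "finite ?R" by simp
    fix r
    show "defs D (\<lambda>p. \<exists>p' z. p = p' @ z \<and> p' = pw v (N + r) \<and> z \<in> wstar (pw v c))"
      by (rule defs_split[OF defs_word[of UNIV] defs_star[of UNIV]]) simp
  qed
  show ?thesis
    by (rule defs_cong[OF defs_disj[OF d1 d2]]) (simp only: char)
qed

lemma main_A: "reg R \<Longrightarrow> defs D (\<lambda>x. x \<in> Bl vs \<and> x \<in> R)"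
proof (induction vs arbitrary: R D)
  case Nil
  show ?case
  proof (cases "[] \<in> R")
    case True
    show ?thesis by (rule defs_cong[OF defs_word[of D "[]"]]) (auto simp: True)
  next
    case False
    show ?thesis by (rule defs_cong[OF defs_const[of D False]]) (auto simp: False)
  qed
next
  case (Cons v vs)
  let ?Q = "range (\<lambda>p. quot p R)"
  have fQ: "finite ?Q" using Cons.prems unfolding reg_def .
  have each: "defs D (\<lambda>x. \<exists>p y. x = p @ y \<and> (p \<in> wstar v \<and> p \<in> {p. quot p R = q}) \<and> (y \<in> Bl vs \<and> y \<in> q))"
    if q: "q \<in> ?Q" for q
  proof -
    obtain p0 where p0: "q = quot p0 R" using q by blast
    have hA: "defs UNIV (\<lambda>p. p \<in> wstar v \<and> p \<in> {p. quot p R = q})"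
      by (rule defs_unary[OF reg_level[OF Cons.prems]])
    have hB: "defs UNIV (\<lambda>y. y \<in> Bl vs \<and> y \<in> q)"
      unfolding p0 by (rule Cons.IH[OF reg_quot[OF Cons.prems]])
    show ?thesis by (rule defs_split[OF hA hB]) simp
  qed
  have "defs D (\<lambda>x. \<exists>q\<in>?Q. \<exists>p y. x = p @ y \<and> (p \<in> wstar v \<and> p \<in> {p. quot p R = q}) \<and> (y \<in> Bl vs \<and> y \<in> q))"
    by (rule defs_Bex[OF fQ each])
  then show ?case
  proof (rule defs_cong)
    fix x
    show "(\<exists>q\<in>?Q. \<exists>p y. x = p @ y \<and> (p \<in> wstar v \<and> p \<in> {p. quot p R = q}) \<and> (y \<in> Bl vs \<and> y \<in> q)) =
          (x \<in> Bl (v # vs) \<and> x \<in> R)"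
      by (auto simp: conc_def quot_def)
  qed
qed



lemma conc_assoc: "conc (conc A B) C = conc A (conc B C)"
  unfolding conc_def by (auto, metis append.assoc, metis append.assoc)

lemma conc_Nil: "conc {[]} X = X"
  unfolding conc_def by auto

lemma Bl_app: "Bl (l1 @ l2) = conc (Bl l1) (Bl l2)"
  by (induction l1) (simp_all add: conc_Nil conc_assoc)

lemma wstar_Nil: "[] \<in> wstar w" unfolding wstar_iff by (rule exI[of _ 0]) simp

lemma wstar_pw: "pw w a \<in> wstar w" unfolding wstar_iff by blast

lemma Bl_Nil_mem: "[] \<in> Bl l"
  by (induction l) (auto simp: conc_def wstar_Nil)

lemma conc_I: "x \<in> A \<Longrightarrow> y \<in> B \<Longrightarrow> x @ y \<in> conc A B"
  unfolding conc_def by blast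

lemma Bl_elem: "c \<in> set l \<Longrightarrow> c \<in> Bl l"
proof (induction l)
  case Nil then show ?case by simp
next
  case (Cons a l)
  show ?case
  proof (cases "c = a")
    case True
    have "a \<in> wstar a" using wstar_pw[where w=a and a=1] by simp
    then have "a @ [] \<in> conc (wstar a) (Bl l)" using Bl_Nil_mem by (rule conc_I)
    then show ?thesis using True by simp
  next
    case False
    then have "c \<in> Bl l" using Cons by simp
    then have "[] @ c \<in> Bl (a # l)" using conc_I[OF wstar_Nil] by simp
    then show ?thesis by simp
  qed
qed

definition pres :: "'a list \<Rightarrow> 'a list list" where
  "pres w = map (\<lambda>i. take i w) [0..<Suc (length w)]"

definition sufs :: "'a list \<Rightarrow> 'a list list" where
  "sufs w = map (\<lambda>i. drop i w) [0..<Suc (length w)]"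

lemma take_pres: "take i w \<in> set (pres w)"
proof -
  have "take i w = take (min i (length w)) w" by (simp add: min_def)
  then show ?thesis unfolding pres_def by (auto simp: image_iff)
qed

lemma drop_sufs: "drop i w \<in> set (sufs w)"
proof -
  have "drop i w = drop (min i (length w)) w" by (simp add: min_def)
  then show ?thesis unfolding sufs_def by (auto simp: image_iff)
qed

fun PL :: "'a list list \<Rightarrow> 'a list list" where
  "PL [] = []"
| "PL (w # ws) = w # pres w @ PL ws"

fun SL :: "'a list list \<Rightarrow> 'a list list" where
  "SL [] = []"
| "SL (w # ws) = sufs w @ w # SL ws"

lemma pre_pow: "us @ r = pw w k \<Longrightarrow> \<exists>a i. us = pw w a @ take i w"
proof (induction k arbitrary: us r)
  case 0
  then have "us = pw w 0 @ take 0 w" by simp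
  then show ?case by blast
next
  case (Suc k)
  then have "us @ r = w @ pw w k" by simp
  then obtain t where "(us = w @ t \<and> t @ r = pw w k) \<or> (us @ t = w \<and> r = t @ pw w k)"
    by (auto simp: append_eq_append_conv2)
  then show ?case
  proof
    assume h: "us = w @ t \<and> t @ r = pw w k"
    then obtain a i where "t = pw w a @ take i w" using Suc.IH by blast
    then have "us = pw w (Suc a) @ take i w" using h by simp
    then show ?thesis by blast
  next
    assume h: "us @ t = w \<and> r = t @ pw w k"
    then have "us = pw w 0 @ take (length us) w" by auto
    then show ?thesis by blast
  qed
qed

lemma suf_pow: "r @ us = pw w k \<Longrightarrow> \<exists>a i. us = drop i w @ pw w a"
proof (induction k arbitrary: us r)
  case 0
  then have "us = drop (length w) w @ pw w 0" by simp
  then show ?case by blast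
next
  case (Suc k)
  then have "r @ us = w @ pw w k" by simp
  then obtain t where "(r = w @ t \<and> t @ us = pw w k) \<or> (r @ t = w \<and> us = t @ pw w k)"
    by (auto simp: append_eq_append_conv2)
  then show ?case
  proof
    assume h: "r = w @ t \<and> t @ us = pw w k"
    then show ?thesis using Suc.IH by blast
  next
    assume h: "r @ t = w \<and> us = t @ pw w k"
    then have "us = drop (length r) w @ pw w k" by auto
    then show ?thesis by blast
  qed
qed

lemma prefix_closure: "x \<in> Bl ws \<Longrightarrow> x = p @ r \<Longrightarrow> p \<in> Bl (PL ws)"
proof (induction ws arbitrary: x p r)
  case Nil then show ?case by simp
next
  case (Cons w ws)
  obtain y1 y2 where y: "x = y1 @ y2" "y1 \<in> wstar w" "y2 \<in> Bl ws"
    using Cons.prems(1) by (auto simp: conc_def)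
  obtain k where k: "y1 = pw w k" using y(2) unfolding wstar_iff by blast
  have BL: "Bl (PL (w # ws)) = conc (wstar w) (conc (Bl (pres w)) (Bl (PL ws)))"
    by (simp add: Bl_app)
  obtain t where "(p = y1 @ t \<and> t @ r = y2) \<or> (p @ t = y1 \<and> r = t @ y2)"
    using Cons.prems(2) y(1) by (auto simp: append_eq_append_conv2)
  then show ?case
  proof
    assume h: "p = y1 @ t \<and> t @ r = y2"
    then have "t \<in> Bl (PL ws)" using Cons.IH y(3) by blast
    then have "y1 @ [] @ t \<in> conc (wstar w) (conc (Bl (pres w)) (Bl (PL ws)))"
      using y(2) Bl_Nil_mem by (intro conc_I) auto
    then show ?thesis using h BL by simp
  next
    assume h: "p @ t = y1 \<and> r = t @ y2"
    then obtain a i where p: "p = pw w a @ take i w" using pre_pow k by blast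
    have "take i w \<in> Bl (pres w)" using Bl_elem take_pres by blast
    then have "pw w a @ take i w @ [] \<in> conc (wstar w) (conc (Bl (pres w)) (Bl (PL ws)))"
      using wstar_pw Bl_Nil_mem by (intro conc_I) auto
    then show ?thesis using p BL by simp
  qed
qed

lemma suffix_closure: "x \<in> Bl ws \<Longrightarrow> x = r @ s \<Longrightarrow> s \<in> Bl (SL ws)"
proof (induction ws arbitrary: x s r)
  case Nil then show ?case by simp
next
  case (Cons w ws)
  obtain y1 y2 where y: "x = y1 @ y2" "y1 \<in> wstar w" "y2 \<in> Bl ws"
    using Cons.prems(1) by (auto simp: conc_def)
  obtain k where k: "y1 = pw w k" using y(2) unfolding wstar_iff by blast
  have BL: "Bl (SL (w # ws)) = conc (Bl (sufs w)) (conc (wstar w) (Bl (SL ws)))"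
    by (simp add: Bl_app)
  obtain t where "(r = y1 @ t \<and> t @ s = y2) \<or> (r @ t = y1 \<and> s = t @ y2)"
    using Cons.prems(2) y(1) by (auto simp: append_eq_append_conv2)
  then show ?case
  proof
    assume h: "r = y1 @ t \<and> t @ s = y2"
    then have "s \<in> Bl (SL ws)" using Cons.IH y(3) by blast
    then have "[] @ [] @ s \<in> conc (Bl (sufs w)) (conc (wstar w) (Bl (SL ws)))"
      using wstar_Nil Bl_Nil_mem by (intro conc_I) auto
    then show ?thesis using h BL by simp
  next
    assume h: "r @ t = y1 \<and> s = t @ y2"
    then obtain a i where t: "t = drop i w @ pw w a" using suf_pow k by blast
    have "drop i w \<in> Bl (sufs w)" using Bl_elem drop_sufs by blast
    moreover have "y2 \<in> Bl (SL ws)" using Cons.IH[of y2 "[]" y2] y(3) by simp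
    ultimately have "drop i w @ pw w a @ y2 \<in> conc (Bl (sufs w)) (conc (wstar w) (Bl (SL ws)))"
      using wstar_pw by (intro conc_I) auto
    then show ?thesis using t h BL by simp
  qed
qed

lemma facs_closure: "w \<in> Bl ws \<Longrightarrow> u \<in> facs w \<Longrightarrow> u \<in> Bl (SL (PL ws))"
proof -
  assume w: "w \<in> Bl ws" and "u \<in> facs w"
  then obtain l r where "w = l @ u @ r" unfolding facs_def by blast
  then have "l @ u \<in> Bl (PL ws)" using prefix_closure[OF w, of "l @ u" r] by simp
  then show ?thesis using suffix_closure[of "l @ u" "PL ws" l u] by simp
qed



lemma translate:
  assumes HD: "\<And>r. defs D (\<lambda>u. u \<in> rlang r)" and HW: "\<And>w. w \<in> W \<Longrightarrow> facs w \<subseteq> D"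
  shows "\<exists>\<phi>'. pure_fc \<phi>' \<and> fv \<phi>' \<subseteq> fv \<phi> \<and> (\<forall>w\<in>W. \<forall>\<sigma>. sat w \<sigma> \<phi>' = sat w \<sigma> \<phi>)"
proof (induction \<phi>)
  case (Cat x y z)
  show ?case by (rule exI[of _ "Cat x y z"]) simp
next
  case (Reg x r)
  obtain \<psi> where p1: "pure_fc \<psi>" and p2: "fv \<psi> \<subseteq> {x}" and
    p3: "\<And>w \<sigma> u. \<sigma> x = Some u \<Longrightarrow> u \<in> facs w \<Longrightarrow> u \<in> D \<Longrightarrow> sat w \<sigma> \<psi> = (u \<in> rlang r)"
    using defsE[OF HD[of r], of x] by metis
  show ?case
  proof (rule exI[of _ "Conj (Cat (Var x) (Var x) Eps) \<psi>"], intro conjI ballI allI)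
    show "pure_fc (Conj (Cat (Var x) (Var x) Eps) \<psi>)" using p1 by simp
    show "fv (Conj (Cat (Var x) (Var x) Eps) \<psi>) \<subseteq> fv (Reg x r)" using p2 by auto
    fix w \<sigma> assume w: "w \<in> W"
    show "sat w \<sigma> (Conj (Cat (Var x) (Var x) Eps) \<psi>) = sat w \<sigma> (Reg x r)"
    proof (cases "\<exists>u. \<sigma> x = Some u \<and> u \<in> facs w")
      case True
      then obtain u where u: "\<sigma> x = Some u" "u \<in> facs w" by blast
      then have "u \<in> D" using HW[OF w] by blast
      then have "sat w \<sigma> \<psi> = (u \<in> rlang r)" using p3 u by blast
      then show ?thesis using u by (simp add: facs_Nil)
    next
      case False
      then show ?thesis by auto
    qed
  qed
next
  case (Neg \<phi>)
  from Neg.IH obtain \<phi>' where h: "pure_fc \<phi>' \<and> fv \<phi>' \<subseteq> fv \<phi> \<and> (\<forall>w\<in>W. \<forall>\<sigma>. sat w \<sigma> \<phi>' = sat w \<sigma> \<phi>)" ..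
  show ?case by (rule exI[of _ "Neg \<phi>'"]) (use h in simp)
next
  case (Conj \<phi> \<psi>)
  from Conj.IH(1) obtain \<phi>' where h1: "pure_fc \<phi>' \<and> fv \<phi>' \<subseteq> fv \<phi> \<and> (\<forall>w\<in>W. \<forall>\<sigma>. sat w \<sigma> \<phi>' = sat w \<sigma> \<phi>)" ..
  from Conj.IH(2) obtain \<psi>' where h2: "pure_fc \<psi>' \<and> fv \<psi>' \<subseteq> fv \<psi> \<and> (\<forall>w\<in>W. \<forall>\<sigma>. sat w \<sigma> \<psi>' = sat w \<sigma> \<psi>)" ..
  show ?case by (rule exI[of _ "Conj \<phi>' \<psi>'"]) (use h1 h2 in auto)
next
  case (Disj \<phi> \<psi>)
  from Disj.IH(1) obtain \<phi>' where h1: "pure_fc \<phi>' \<and> fv \<phi>' \<subseteq> fv \<phi> \<and> (\<forall>w\<in>W. \<forall>\<sigma>. sat w \<sigma> \<phi>' = sat w \<sigma> \<phi>)" ..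
  from Disj.IH(2) obtain \<psi>' where h2: "pure_fc \<psi>' \<and> fv \<psi>' \<subseteq> fv \<psi> \<and> (\<forall>w\<in>W. \<forall>\<sigma>. sat w \<sigma> \<psi>' = sat w \<sigma> \<psi>)" ..
  show ?case by (rule exI[of _ "Disj \<phi>' \<psi>'"]) (use h1 h2 in auto)
next
  case (Ex x \<phi>)
  from Ex.IH obtain \<phi>' where h: "pure_fc \<phi>' \<and> fv \<phi>' \<subseteq> fv \<phi> \<and> (\<forall>w\<in>W. \<forall>\<sigma>. sat w \<sigma> \<phi>' = sat w \<sigma> \<phi>)" ..
  show ?case by (rule exI[of _ "Ex x \<phi>'"]) (use h in auto)
next
  case (All x \<phi>)
  from All.IH obtain \<phi>' where h: "pure_fc \<phi>' \<and> fv \<phi>' \<subseteq> fv \<phi> \<and> (\<forall>w\<in>W. \<forall>\<sigma>. sat w \<sigma> \<phi>' = sat w \<sigma> \<phi>)" ..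
  show ?case by (rule exI[of _ "All x \<phi>'"]) (use h in auto)
qed

lemma zzMARK: True by simp
definition Mfm :: "'a fcform" where
  "Mfm = All 1 (Ex 2 (Ex 3 (Ex 4 (Conj (Cat (Var 2) (Var 3) (Var 1)) (Cat (Var 0) (Var 2) (Var 4))))))"

lemma Mfm_fv: "fv Mfm = {0}"
  unfolding Mfm_def by auto

lemma Mfm_pure: "pure_fc Mfm"
  unfolding Mfm_def by simp

lemma Mfm_sem:
  assumes "\<sigma> 0 = Some u" "u \<in> facs w"
  shows "sat w \<sigma> Mfm \<longleftrightarrow> u = w"
proof
  assume "sat w \<sigma> Mfm"
  then have "\<forall>y\<in>facs w. \<exists>p\<in>facs w. \<exists>q\<in>facs w. \<exists>r\<in>facs w. p = q @ y \<and> u = p @ r"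
    using assms unfolding Mfm_def by simp
  then obtain p q r where "p = q @ w" "u = p @ r" using facs_refl by blast
  then have "length u \<ge> length w" by simp
  moreover obtain l r' where "w = l @ u @ r'" using assms(2) unfolding facs_def by blast
  ultimately show "u = w" by simp
next
  assume uw: "u = w"
  have "\<forall>y\<in>facs w. \<exists>p\<in>facs w. \<exists>q\<in>facs w. \<exists>r\<in>facs w. p = q @ y \<and> u = p @ r"
  proof
    fix y assume "y \<in> facs w"
    then obtain q r where wq: "w = q @ y @ r" unfolding facs_def by blast
    then have "q @ y \<in> facs w" "q \<in> facs w" "r \<in> facs w"
      using facs_app[of "q @ y" r w] facs_app[of q y w] facs_refl[of w] by simp_all
    then show "\<exists>p\<in>facs w. \<exists>q\<in>facs w. \<exists>r\<in>facs w. p = q @ y \<and> u = p @ r"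
      using wq uw by auto
  qed
  then show "sat w \<sigma> Mfm" using assms unfolding Mfm_def by simp
qed

lemma whole:
  assumes "defs UNIV (\<lambda>x. x \<in> B)"
  shows "\<exists>\<Phi>. pure_fc \<Phi> \<and> fv \<Phi> = {} \<and> (\<forall>w \<sigma>. sat w \<sigma> \<Phi> \<longleftrightarrow> w \<in> B)"
proof -
  obtain \<psi> where p1: "pure_fc \<psi>" and p2: "fv \<psi> \<subseteq> {0}" and
    p3: "\<And>w \<sigma> u. \<sigma> 0 = Some u \<Longrightarrow> u \<in> facs w \<Longrightarrow> u \<in> UNIV \<Longrightarrow> sat w \<sigma> \<psi> = (u \<in> B)"
    using defsE[OF assms, of 0] by metis
  let ?F = "Ex 0 (Conj Mfm \<psi>)"
  have "pure_fc ?F" using p1 Mfm_pure by simp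
  moreover have "fv ?F = {}" using p2 Mfm_fv by auto
  moreover have "sat w \<sigma> ?F \<longleftrightarrow> w \<in> B" for w \<sigma>
  proof -
    have "sat w \<sigma> ?F \<longleftrightarrow> (\<exists>u\<in>facs w. sat w (\<sigma>(0 := Some u)) Mfm \<and> sat w (\<sigma>(0 := Some u)) \<psi>)"
      by simp
    also have "\<dots> \<longleftrightarrow> (\<exists>u\<in>facs w. u = w \<and> u \<in> B)"
    proof (rule bex_cong[OF refl])
      fix u assume "u \<in> facs w"
      then show "(sat w (\<sigma>(0 := Some u)) Mfm \<and> sat w (\<sigma>(0 := Some u)) \<psi>) = (u = w \<and> u \<in> B)"
        using Mfm_sem[of "\<sigma>(0 := Some u)" u w] p3[of "\<sigma>(0 := Some u)" u w] by simp
    qed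
    also have "\<dots> \<longleftrightarrow> w \<in> B" using facs_refl by blast
    finally show ?thesis .
  qed
  ultimately show ?thesis by blast
qed

lemma bounded_Bl: "bounded_lang L \<longleftrightarrow> (\<exists>ws. L \<subseteq> Bl ws)"
  unfolding bounded_lang_def Bl_def by simp

lemma bounded_case:
  assumes b: "bounded_lang L" and d: "FCREG_definable L"
  shows "FC_definable L"
proof -
  obtain ws where L: "L \<subseteq> Bl ws" using b bounded_Bl by blast
  obtain \<phi> where phi: "fv \<phi> = {}" "L = flang \<phi>" using d unfolding FCREG_definable_def by blast
  let ?D = "Bl (SL (PL ws))"
  have HD: "defs ?D (\<lambda>u. u \<in> rlang r)" for r
    by (rule defs_cong[OF main_A[OF reg_rlang, of ?D "SL (PL ws)" r]]) simp
  have HW: "facs w \<subseteq> ?D" if "w \<in> Bl ws" for w using facs_closure[OF that] by blast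
  from translate[of ?D "Bl ws" \<phi>, OF HD HW] obtain \<phi>' where
    t: "pure_fc \<phi>' \<and> fv \<phi>' \<subseteq> fv \<phi> \<and> (\<forall>w\<in>Bl ws. \<forall>\<sigma>. sat w \<sigma> \<phi>' = sat w \<sigma> \<phi>)" ..
  note t1 = t[THEN conjunct1] and t2 = t[THEN conjunct2, THEN conjunct1]
    and t3 = t[THEN conjunct2, THEN conjunct2]
  have hb: "defs UNIV (\<lambda>x. x \<in> Bl ws)"
    by (rule defs_cong[OF main_A[OF reg_UNIV, of UNIV ws]]) simp
  from whole[OF hb] obtain \<Phi> where P: "pure_fc \<Phi> \<and> fv \<Phi> = {} \<and> (\<forall>w \<sigma>. sat w \<sigma> \<Phi> \<longleftrightarrow> w \<in> Bl ws)" ..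
  note P1 = P[THEN conjunct1] and P2 = P[THEN conjunct2, THEN conjunct1]
    and P3 = P[THEN conjunct2, THEN conjunct2]
  have "fv (Conj \<Phi> \<phi>') = {}" using t2 P2 phi(1) by auto
  moreover have "pure_fc (Conj \<Phi> \<phi>')" using t1 P1 by simp
  moreover have "L = flang (Conj \<Phi> \<phi>')"
  proof (rule set_eqI)
    fix w
    have "w \<in> flang (Conj \<Phi> \<phi>') \<longleftrightarrow> w \<in> Bl ws \<and> sat w (\<lambda>_. None) \<phi>'"
      unfolding flang_def using P3 by simp
    also have "\<dots> \<longleftrightarrow> w \<in> Bl ws \<and> sat w (\<lambda>_. None) \<phi>" using t3 by blast
    also have "\<dots> \<longleftrightarrow> w \<in> L" using L phi(2) unfolding flang_def by blast
    finally show "w \<in> L \<longleftrightarrow> w \<in> flang (Conj \<Phi> \<phi>')" by blast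
  qed
  ultimately show ?thesis unfolding FC_definable_def by blast
qed

lemma bounded_sub: "bounded_lang A \<Longrightarrow> B \<subseteq> A \<Longrightarrow> bounded_lang B"
  unfolding bounded_Bl by blast

lemma bounded_un: "bounded_lang A \<Longrightarrow> bounded_lang B \<Longrightarrow> bounded_lang (A \<union> B)"
proof -
  assume "bounded_lang A" "bounded_lang B"
  then obtain l1 l2 where l: "A \<subseteq> Bl l1" "B \<subseteq> Bl l2" unfolding bounded_Bl by blast
  have "Bl l1 \<subseteq> Bl (l1 @ l2)"
  proof
    fix x assume "x \<in> Bl l1"
    then have "x @ [] \<in> conc (Bl l1) (Bl l2)" using Bl_Nil_mem by (rule conc_I)
    then show "x \<in> Bl (l1 @ l2)" by (simp add: Bl_app)
  qed
  moreover have "Bl l2 \<subseteq> Bl (l1 @ l2)"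
  proof
    fix x assume "x \<in> Bl l2"
    then have "[] @ x \<in> conc (Bl l1) (Bl l2)" using Bl_Nil_mem by (intro conc_I)
    then show "x \<in> Bl (l1 @ l2)" by (simp add: Bl_app)
  qed
  ultimately show ?thesis using l unfolding bounded_Bl by blast
qed

lemma bcb: "bool_comb_bounded L \<Longrightarrow> bounded_lang L \<or> bounded_lang (- L)"
proof (induction rule: bool_comb_bounded.induct)
  case (base L) then show ?case by simp
next
  case (compl L) then show ?case by (simp add: disj_commute)
next
  case (union A B)
  show ?case
  proof (cases "bounded_lang A \<and> bounded_lang B")
    case True then show ?thesis using bounded_un by blast
  next
    case False
    then have "bounded_lang (- A) \<or> bounded_lang (- B)" using union.IH by blast
    then have "bounded_lang (- (A \<union> B))"
    proof
      assume "bounded_lang (- A)"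
      then show ?thesis by (rule bounded_sub) blast
    next
      assume "bounded_lang (- B)"
      then show ?thesis by (rule bounded_sub) blast
    qed
    then show ?thesis by simp
  qed
next
  case (inter A B)
  show ?case
  proof (cases "bounded_lang A \<or> bounded_lang B")
    case True then have "bounded_lang (A \<inter> B)"
    proof
      assume "bounded_lang A"
      then show ?thesis by (rule bounded_sub) blast
    next
      assume "bounded_lang B"
      then show ?thesis by (rule bounded_sub) blast
    qed
    then show ?thesis by simp
  next
    case False
    then have "bounded_lang (- A)" "bounded_lang (- B)" using inter.IH by blast+
    then have "bounded_lang (- A \<union> - B)" by (rule bounded_un)
    then show ?thesis by simp
  qed
qed

lemma flang_Neg: "flang (Neg \<phi>) = - flang \<phi>"
  unfolding flang_def by auto

theorem lemma5p3:
  fixes L :: "('a::finite) list set"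
  assumes "bool_comb_bounded L"
  shows "FC_definable L \<longleftrightarrow> FCREG_definable L"
proof
  assume "FC_definable L"
  then show "FCREG_definable L" unfolding FC_definable_def FCREG_definable_def by blast
next
  assume d: "FCREG_definable L"
  from bcb[OF assms] show "FC_definable L"
  proof
    assume "bounded_lang L"
    then show ?thesis using bounded_case d by blast
  next
    assume b: "bounded_lang (- L)"
    obtain \<phi> where phi: "fv \<phi> = {}" "L = flang \<phi>" using d unfolding FCREG_definable_def by blast
    have "FCREG_definable (- L)" unfolding FCREG_definable_def
      using phi flang_Neg[of \<phi>] by (intro exI[of _ "Neg \<phi>"]) simp
    then have "FC_definable (- L)" using bounded_case b by blast
    then obtain \<psi> where psi: "fv \<psi> = {}" "pure_fc \<psi>" "- L = flang \<psi>" unfolding FC_definable_def by blast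
    have "L = flang (Neg \<psi>)" using psi(3) flang_Neg[of \<psi>] by (metis double_compl)
    then show ?thesis unfolding FC_definable_def using psi by (intro exI[of _ "Neg \<psi>"]) simp
  qed
qed

end
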